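(* Let $\alpha>0$, $\mathfrak r\ge0$, $\eta:=\mathfrak r/\alpha$, and $L(\rho)=L_0+L_1\rho$ with $L_0\ge0$, $L_1>0$. For $\rho>0$ let $p(\rho):=\eta+\frac12\alpha^{-2}L(\rho)\rho^2-\rho$, $q(\rho):=\alpha^{-1}L(\rho)\rho$, call $\rho$ admissible ($\mathsf{Adm}(\rho)$) if $p(\rho)\le0$ and $q(\rho)<1$, and let $\mathcal{AD}:=\{\rho>0:\mathsf{Adm}(\rho)\}$. Assume $\mathcal{AD}\neq\emptyset$ and let $\rho_+:=\sup\mathcal{AD}$. Consider the bisection procedure: starting from $0<\rho_{\rm low}^{(0)}<\rho_{\rm up}^{(0)}$ with $\mathsf{Adm}(\rho_{\rm low}^{(0)})$ true and $\mathsf{Adm}(\rho_{\rm up}^{(0)})$ false, repeat $k_{\max}$ times: set $\rho_{\rm mid}:=(\rho_{\rm low}+\rho_{\rm up})/2$; if $\mathsf{Adm}(\rho_{\rm mid})$ then $\rho_{\rm low}\gets\rho_{\rm mid}$, else $\rho_{\rm up}\gets\rho_{\rm mid}$; finally return $\rho_{\rm low}$. Then every iteration preserves $\mathsf{Adm}(\rho_{\rm low})$ true and $\mathsf{Adm}(\rho_{\rm up})$ false, and the returned $\rho_{\rm low}$ is admissible and satisfies $$\rho_{\rm low}\le\rho_+\le\rho_{\rm up},\qquad \rho_{\rm up}-\rho_{\rm low}\le2^{-k_{\max}}\bigl(\rho_{\rm up}^{(0)}-\rho_{\rm low}^{(0)}\bigr).$$ Furthermore, consider the preceding shrinking phase: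 test $\rho=2\eta$; if inadmissible, set $\rho_{\rm up}:=2\eta$ and for $j=1,\dots,j_{\max}$ set $\rho_{\rm low}:=\rho_{\rm up}/2$, stop if $\mathsf{Adm}(\rho_{\rm low})$, otherwise $\rho_{\rm up}:=\rho_{\rm low}$; return fail if the last tested $\rho_{\rm low}$ is inadmissible. If this phase returns fail, then $\mathsf{Adm}(2\eta/2^j)$ is false for every $j=0,1,\dots,j_{\max}$. *)

theory Defs
  imports Complex_Main
begin

definition Lfun :: "real \<Rightarrow> real \<Rightarrow> real \<Rightarrow> real" where
  "Lfun L0 L1 \<rho> = L0 + L1 * \<rho>"

definition pfun :: "real \<Rightarrow> real \<Rightarrow> real \<Rightarrow> real \<Rightarrow> real \<Rightarrow> real" where
  "pfun \<alpha> r L0 L1 \<rho> = r / \<alpha> + (1/2) * \<alpha> powi (-2) * Lfun L0 L1 \<rho> * \<rho>^2 - \<rho>"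

definition qfun :: "real \<Rightarrow> real \<Rightarrow> real \<Rightarrow> real \<Rightarrow> real" where
  "qfun \<alpha> L0 L1 \<rho> = inverse \<alpha> * Lfun L0 L1 \<rho> * \<rho>"

definition Adm :: "real \<Rightarrow> real \<Rightarrow> real \<Rightarrow> real \<Rightarrow> real \<Rightarrow> bool" where
  "Adm \<alpha> r L0 L1 \<rho> \<longleftrightarrow> \<rho> > 0 \<and> pfun \<alpha> r L0 L1 \<rho> \<le> 0 \<and> qfun \<alpha> L0 L1 \<rho> < 1"

definition AD :: "real \<Rightarrow> real \<Rightarrow> real \<Rightarrow> real \<Rightarrow> real set" where
  "AD \<alpha> r L0 L1 = {\<rho>. \<rho> > 0 \<and> Adm \<alpha> r L0 L1 \<rho>}"

fun bisect :: "(real \<Rightarrow> bool) \<Rightarrow> nat \<Rightarrow> real \<Rightarrow> real \<Rightarrow> real \<times> real" where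
  "bisect A 0 lo up = (lo, up)"
| "bisect A (Suc k) lo up =
     (let (l, u) = bisect A k lo up; m = (l + u) / 2
      in if A m then (m, u) else (l, m))"

datatype shrink_result = Shrink_Adm real | Shrink_Bracket real real | Shrink_Fail

fun shrink_loop :: "(real \<Rightarrow> bool) \<Rightarrow> nat \<Rightarrow> real \<Rightarrow> shrink_result" where
  "shrink_loop A 0 up = Shrink_Fail"
| "shrink_loop A (Suc n) up =
     (let lo = up / 2 in if A lo then Shrink_Bracket lo up else shrink_loop A n lo)"

definition shrink_phase :: "(real \<Rightarrow> bool) \<Rightarrow> real \<Rightarrow> nat \<Rightarrow> shrink_result" where
  "shrink_phase A \<eta> jmax =
     (if A (2 * \<eta>) then Shrink_Adm (2 * \<eta>) else shrink_loop A jmax (2 * \<eta>))"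

end

theory Submission imports Defs "HOL-Analysis.Analysis" begin

lemma pfun_alt: "pfun \<alpha> r L0 L1 x = r/\<alpha> + ((1/2) * \<alpha> powi (-2) * L0) * x^2 + ((1/2) * \<alpha> powi (-2) * L1) * x^3 - x"
  unfolding pfun_def Lfun_def by (simp add: algebra_simps power2_eq_square power3_eq_cube)

lemma pconv:
  assumes "L0 \<ge> 0" "L1 \<ge> 0"
  shows "convex_on {0..} (pfun \<alpha> r L0 L1)"
proof -
  have "\<alpha> powi (-2) = inverse (\<alpha> powi 2)" by (rule power_int_minus)
  also have "\<dots> = inverse (\<alpha>^2)" by (simp add: power_int_nonneg_exp)
  finally have e: "\<alpha> powi (-2) = inverse (\<alpha>^2)" .
  have c: "(1/2) * \<alpha> powi (-2) \<ge> 0" unfolding e by simp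
  have "convex_on {0::real..} (\<lambda>x. r/\<alpha> + ((1/2) * \<alpha> powi (-2) * L0) * x^2 + ((1/2) * \<alpha> powi (-2) * L1) * x^3 - x)"
    apply (intro convex_on_diff convex_on_add convex_on_cmul)
    using assms c convex_power_odd[of 3] convex_on_subset[OF convex_power2] 
    by (auto simp: convex_on_const concave_on_ident)
  moreover have "pfun \<alpha> r L0 L1 = (\<lambda>x. r/\<alpha> + ((1/2) * \<alpha> powi (-2) * L0) * x^2 + ((1/2) * \<alpha> powi (-2) * L1) * x^3 - x)"
    by (rule ext, rule pfun_alt)
  ultimately show ?thesis by simp
qed

lemma lin_aux: "(d::real) \<noteq> 0 \<Longrightarrow> (B - A) / d * y + A = (y / d) * B + (1 - y / d) * A"
  by (simp add: field_simps)

lemma p_between: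
  assumes "L0 \<ge> 0" "L1 \<ge> 0" "0 < a" "a \<le> x" "x \<le> b"
    "pfun \<alpha> r L0 L1 a \<le> 0" "pfun \<alpha> r L0 L1 b \<le> 0"
  shows "pfun \<alpha> r L0 L1 x \<le> 0"
proof (cases "a = b")
  case True then show ?thesis using assms by auto
next
  case False
  let ?P = "pfun \<alpha> r L0 L1"
  have cv: "convex_on {a..b} ?P"
    by (rule convex_on_subset[OF pconv[OF assms(1,2)]]) (use assms in auto)
  have d: "b - a > 0" using assms False by auto
  have "?P x \<le> (?P b - ?P a) / (b - a) * (x - a) + ?P a"
    using convex_onD_Icc'[OF cv, of x] assms by auto
  also have "\<dots> = ((x - a)/(b-a)) * ?P b + (1 - (x-a)/(b-a)) * ?P a"
    using d lin_aux[of "b - a" "?P b" "?P a" "x - a"] by simp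
  also have "\<dots> \<le> 0"
  proof -
    have s0: "(x - a)/(b-a) \<ge> 0" "(x - a)/(b-a) \<le> 1" using d assms by auto
    then show ?thesis using assms(6,7)
      by (metis add_nonpos_nonpos diff_ge_0_iff_ge mult_nonneg_nonpos)
  qed
  finally show ?thesis .
qed

lemma q_mono:
  assumes "\<alpha> > 0" "L0 \<ge> 0" "L1 \<ge> 0" "0 < x" "x \<le> b"
  shows "qfun \<alpha> L0 L1 x \<le> qfun \<alpha> L0 L1 b"
proof -
  have "(L0 + L1 * x) * x \<le> (L0 + L1 * b) * b"
    using assms by (intro mult_mono add_mono) (auto intro: mult_left_mono)
  then show ?thesis unfolding qfun_def Lfun_def using assms
    by (simp add: mult.assoc)
qed


lemma adm_between:
  assumes "\<alpha> > 0" "L0 \<ge> 0" "L1 \<ge> 0" "Adm \<alpha> r L0 L1 a" "Adm \<alpha> r L0 L1 b" "a \<le> x" "x \<le> b"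
  shows "Adm \<alpha> r L0 L1 x"
  using assms p_between[of L0 L1 a x b \<alpha> r] q_mono[of \<alpha> L0 L1 x b]
  unfolding Adm_def by auto

lemma bisect_inv:
  assumes "A lo0" "\<not> A up0" "lo0 < up0"
  shows "A (fst (bisect A k lo0 up0)) \<and> \<not> A (snd (bisect A k lo0 up0))
    \<and> fst (bisect A k lo0 up0) < snd (bisect A k lo0 up0)
    \<and> snd (bisect A k lo0 up0) - fst (bisect A k lo0 up0) = (up0 - lo0) / 2 ^ k"
proof (induction k)
  case 0 then show ?case using assms by simp
next
  case (Suc k)
  obtain l u where lu: "bisect A k lo0 up0 = (l, u)" by fastforce
  from Suc lu have ih: "A l" "\<not> A u" "l < u" "u - l = (up0 - lo0) / 2 ^ k" by auto
  show ?case
  proof (cases "A ((l + u) / 2)")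
    case True
    then show ?thesis using ih lu by (simp add: field_simps)
  next
    case False
    then show ?thesis using ih lu by (simp add: field_simps)
  qed
qed

lemma shrink_loop_fail:
  "shrink_loop A n up = Shrink_Fail \<Longrightarrow> 1 \<le> j \<Longrightarrow> j \<le> n \<Longrightarrow> \<not> A (up / 2 ^ j)"
proof (induction n arbitrary: up j)
  case 0 then show ?case by simp
next
  case (Suc n)
  have na: "\<not> A (up / 2)" and rest: "shrink_loop A n (up / 2) = Shrink_Fail"
    using Suc.prems(1) by (auto simp: Let_def split: if_splits)
  show ?case
  proof (cases "j = 1")
    case True then show ?thesis using na by simp
  next
    case False
    then obtain i where i: "j = Suc i" "1 \<le> i" "i \<le> n" using Suc.prems by (cases j) auto
    have "\<not> A (up / 2 / 2 ^ i)" using Suc.IH[OF rest i(2,3)] .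
    then show ?thesis using i by (simp add: field_simps)
  qed
qed

lemma AD_bdd:
  assumes "\<alpha> > 0" "L0 \<ge> 0" "L1 > 0"
  shows "bdd_above (AD \<alpha> r L0 L1)"
proof (rule bdd_aboveI[of _ "max 1 (\<alpha> / L1)"])
  fix x assume "x \<in> AD \<alpha> r L0 L1"
  then have x: "x > 0" "inverse \<alpha> * (L0 + L1 * x) * x < 1"
    unfolding AD_def Adm_def qfun_def Lfun_def by auto
  have "(L0 + L1 * x) * x < \<alpha>" using x assms
    by (simp add: field_simps mult.assoc)
  then have h: "L1 * x * x < \<alpha>" using x assms
    by (smt (verit, ccfv_SIG) distrib_right mult_nonneg_nonneg)
  show "x \<le> max 1 (\<alpha> / L1)"
  proof (cases "x \<le> 1")
    case False
    have "L1 * x * (x - 1) \<ge> 0" using assms x False by simp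
    then have "L1 * x \<le> L1 * x * x" by (simp add: algebra_simps)
    then have "L1 * x < \<alpha>" using h by linarith
    then have "x < \<alpha> / L1" using assms by (simp add: field_simps)
    then show ?thesis by simp
  qed simp
qed

theorem propositionA2:
  fixes \<alpha> r L0 L1 lo0 up0 :: real and kmax jmax :: nat
  assumes "\<alpha> > 0" and "r \<ge> 0" and "L0 \<ge> 0" and "L1 > 0"
    and "AD \<alpha> r L0 L1 \<noteq> {}"
  shows "(0 < lo0 \<and> lo0 < up0 \<and> Adm \<alpha> r L0 L1 lo0 \<and> \<not> Adm \<alpha> r L0 L1 up0 \<longrightarrow>
           (\<forall>k\<le>kmax. Adm \<alpha> r L0 L1 (fst (bisect (Adm \<alpha> r L0 L1) k lo0 up0))
                     \<and> \<not> Adm \<alpha> r L0 L1 (snd (bisect (Adm \<alpha> r L0 L1) k lo0 up0)))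
         \<and> (let (lo, up) = bisect (Adm \<alpha> r L0 L1) kmax lo0 up0 in
              Adm \<alpha> r L0 L1 lo \<and> lo \<le> Sup (AD \<alpha> r L0 L1) \<and> Sup (AD \<alpha> r L0 L1) \<le> up
              \<and> up - lo \<le> (up0 - lo0) / 2 ^ kmax))
       \<and> (shrink_phase (Adm \<alpha> r L0 L1) (r / \<alpha>) jmax = Shrink_Fail \<longrightarrow>
           (\<forall>j\<le>jmax. \<not> Adm \<alpha> r L0 L1 (2 * (r / \<alpha>) / 2 ^ j)))"
proof (intro conjI impI)
  let ?A = "Adm \<alpha> r L0 L1"
  assume h: "0 < lo0 \<and> lo0 < up0 \<and> ?A lo0 \<and> \<not> ?A up0"
  note bi = bisect_inv[of ?A lo0 up0, OF _ _ _]
  show "\<forall>k\<le>kmax. ?A (fst (bisect ?A k lo0 up0)) \<and> \<not> ?A (snd (bisect ?A k lo0 up0))"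
    using bi h by blast
  obtain lo up where lu: "bisect ?A kmax lo0 up0 = (lo, up)" by fastforce
  have inv: "?A lo" "\<not> ?A up" "lo < up" "up - lo = (up0 - lo0) / 2 ^ kmax"
    using bi[of kmax] h lu by auto
  have bdd: "bdd_above (AD \<alpha> r L0 L1)" by (rule AD_bdd[OF assms(1,3,4)])
  have lo_in: "lo \<in> AD \<alpha> r L0 L1" using inv unfolding AD_def Adm_def by auto
  have "lo \<le> Sup (AD \<alpha> r L0 L1)" by (rule cSup_upper[OF lo_in bdd])
  moreover have "Sup (AD \<alpha> r L0 L1) \<le> up"
  proof (rule cSup_least[OF assms(5)])
    fix x assume "x \<in> AD \<alpha> r L0 L1"
    then have ax: "?A x" unfolding AD_def by auto
    show "x \<le> up"
    proof (rule ccontr)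
      assume "\<not> x \<le> up"
      then have "?A up" using adm_between[of \<alpha> L0 L1 r lo x up] inv ax assms by auto
      then show False using inv by simp
    qed
  qed
  ultimately show "let (lo, up) = bisect ?A kmax lo0 up0 in
              ?A lo \<and> lo \<le> Sup (AD \<alpha> r L0 L1) \<and> Sup (AD \<alpha> r L0 L1) \<le> up
              \<and> up - lo \<le> (up0 - lo0) / 2 ^ kmax"
    using lu inv by simp
next
  let ?A = "Adm \<alpha> r L0 L1"
  assume f: "shrink_phase ?A (r / \<alpha>) jmax = Shrink_Fail"
  then have n0: "\<not> ?A (2 * (r / \<alpha>))" and sl: "shrink_loop ?A jmax (2 * (r / \<alpha>)) = Shrink_Fail"
    unfolding shrink_phase_def by (auto split: if_splits)
  show "\<forall>j\<le>jmax. \<not> ?A (2 * (r / \<alpha>) / 2 ^ j)"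
  proof (intro allI impI)
    fix j assume "j \<le> jmax"
    then show "\<not> ?A (2 * (r / \<alpha>) / 2 ^ j)"
      using n0 shrink_loop_fail[OF sl, of j] by (cases "j = 0") auto
  qed
qed

end
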